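(* Let $l<u$ be real, let $\Delta Q$ be real with $0<\Delta Q\le u-l$, and let $\epsilon\ge0$, $0\le\delta<1$. Let $b^*>0$ satisfy $f(b^* )=b^*$. Then for every $\xi>0$, $f(b^*+\xi)$ is defined and $b^*+\xi> f(b^*+\xi)$.
   Context: For $b>0$ and $p\in[l,u]$, $C_p(b)= 1-\frac12\left(e^{-\frac{p-l}{b}}+e^{-\frac{u-p}{b}}\right)$ (the integral $\int_l^u\frac{1}{2b}e^{-|x-p|/b}dx$), and $\Delta C(b)=\frac{C_{l+\Delta Q}(b)}{C_l(b)}$. The map $f$ is defined for $b>0$ with $\epsilon-\log\Delta C(b)-\log(1-\delta)\neq 0$ by $f(b)=\frac{\Delta Q}{\epsilon-\log\Delta C(b)-\log(1-\delta)}$. *)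

theory Defs
  imports "HOL-Analysis.Analysis"
begin

text \<open>Mass of the Laplace distribution centred at p with scale b on [l,u].\<close>
definition Cp :: "real \<Rightarrow> real \<Rightarrow> real \<Rightarrow> real \<Rightarrow> real" where
  "Cp l u p b = 1 - (exp (- (p - l) / b) + exp (- (u - p) / b)) / 2"

definition DeltaC :: "real \<Rightarrow> real \<Rightarrow> real \<Rightarrow> real \<Rightarrow> real" where
  "DeltaC l u dQ b = Cp l u (l + dQ) b / Cp l u l b"

definition f_den :: "real \<Rightarrow> real \<Rightarrow> real \<Rightarrow> real \<Rightarrow> real \<Rightarrow> real \<Rightarrow> real" where
  "f_den l u dQ eps delta b = eps - ln (DeltaC l u dQ b) - ln (1 - delta)"

definition f_defined :: "real \<Rightarrow> real \<Rightarrow> real \<Rightarrow> real \<Rightarrow> real \<Rightarrow> real \<Rightarrow> bool" where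
  "f_defined l u dQ eps delta b \<longleftrightarrow> b > 0 \<and> f_den l u dQ eps delta b \<noteq> 0"

definition f :: "real \<Rightarrow> real \<Rightarrow> real \<Rightarrow> real \<Rightarrow> real \<Rightarrow> real \<Rightarrow> real" where
  "f l u dQ eps delta b = dQ / f_den l u dQ eps delta b"

end

theory Submission
  imports Defs
begin

definition pp :: "real \<Rightarrow> real \<Rightarrow> real" where "pp c b = 1 - exp (- c / b)"
definition HH :: "real \<Rightarrow> real \<Rightarrow> real \<Rightarrow> real" where
  "HH a c b = pp a b * pp c b / (pp a b + pp c b)"

lemma pp_bounds: "0 \<le> c \<Longrightarrow> 0 < b \<Longrightarrow> 0 \<le> pp c b \<and> pp c b < 1"
  unfolding pp_def by (auto simp: divide_nonneg_pos)

lemma pp_pos: "0 < c \<Longrightarrow> 0 < b \<Longrightarrow> 0 < pp c b"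
  unfolding pp_def by (simp add: divide_pos_pos)

lemma pp_mono: "0 \<le> c \<Longrightarrow> 0 < b1 \<Longrightarrow> b1 \<le> b2 \<Longrightarrow> pp c b2 \<le> pp c b1"
  unfolding pp_def by (simp add: frac_le)

lemma H_mono:
  fixes p q p' q' :: real
  assumes "0 < p" "p \<le> p'" "0 \<le> q" "q \<le> q'"
  shows "p*q/(p+q) \<le> p'*q'/(p'+q')"
proof -
  have "p*q*p' \<le> p'*q'*p" using assms by (simp add: mult_left_mono mult.commute mult.left_commute)
  moreover have "p*q*q' \<le> p'*q'*q" using assms
    by (metis mult.commute mult.left_commute mult_left_mono mult_nonneg_nonneg order_less_imp_le order_trans)
  ultimately have "p*q*(p'+q') \<le> p'*q'*(p+q)" by (simp add: algebra_simps)
  moreover have "0 < p+q" "0 < p'+q'" using assms by auto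
  ultimately show ?thesis by (simp add: divide_simps)
qed

lemma den_formula:
  assumes "0 < dQ" "dQ \<le> u - l" "0 < b" "delta < 1"
  shows "f_den l u dQ eps delta b = eps - ln (1 - delta) + ln (1 - HH dQ (u-l-dQ) b)"
    and "HH dQ (u-l-dQ) b < 1" "0 \<le> HH dQ (u-l-dQ) b"
proof -
  define p where "p = pp dQ b"
  define q where "q = pp (u-l-dQ) b"
  have p: "0 < p" "p < 1" using pp_pos[of dQ b] pp_bounds[of dQ b] assms p_def by auto
  have q: "0 \<le> q" "q < 1" using pp_bounds[of "u-l-dQ" b] assms q_def by auto
  have e: "exp (- (u - l) / b) = (1-p)*(1-q)"
    unfolding p_def q_def pp_def by (simp add: exp_add[symmetric] diff_divide_distrib)
  have c1: "Cp l u (l + dQ) b = (p+q)/2"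
    unfolding Cp_def p_def q_def pp_def by (simp add: algebra_simps)
  have "Cp l u l b = 1 - (1 + exp (- (u - l) / b))/2" unfolding Cp_def by simp
  also have "\<dots> = (p+q-p*q)/2" unfolding e by (simp add: field_simps)
  finally have c2: "Cp l u l b = (p+q-p*q)/2" .
  have H: "HH dQ (u-l-dQ) b = p*q/(p+q)" unfolding HH_def p_def q_def ..
  have pq: "p*q < p" using p q by (simp add: mult_strict_left_mono[of q 1 p, simplified])
  have Hlt: "p*q/(p+q) < 1" proof -
    have "p*q < p+q" using pq q by linarith
    thus ?thesis using p q by simp
  qed
  have Hge: "0 \<le> p*q/(p+q)" using p q by simp
  have dc: "DeltaC l u dQ b = 1 / (1 - p*q/(p+q))"
    proof -
    have ne: "p+q-p*q \<noteq> 0" "p+q \<noteq> 0" using p q pq by linarith+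
    have "1 - p*q/(p+q) = (p+q-p*q)/(p+q)" using ne by (simp add: field_simps)
    thus ?thesis unfolding DeltaC_def c1 c2 using ne by (simp add: field_simps)
  qed
  show "HH dQ (u-l-dQ) b < 1" "0 \<le> HH dQ (u-l-dQ) b" using H Hlt Hge by auto
  show "f_den l u dQ eps delta b = eps - ln (1 - delta) + ln (1 - HH dQ (u-l-dQ) b)"
    unfolding f_den_def dc H using Hlt by (simp add: ln_div)
qed

theorem mainTheorem9:
  fixes l u dQ eps delta bstar :: real
  assumes "l < u" and "0 < dQ" and "dQ \<le> u - l"
    and "0 \<le> eps" and "0 \<le> delta" and "delta < 1"
    and "bstar > 0"
    and "f_defined l u dQ eps delta bstar"
    and "f l u dQ eps delta bstar = bstar"
  shows "\<forall>\<xi>>0. f_defined l u dQ eps delta (bstar + \<xi>)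
                \<and> bstar + \<xi> > f l u dQ eps delta (bstar + \<xi>)"
proof (intro allI impI)
  fix xi :: real assume xi: "xi > 0"
  define b where "b = bstar + xi"
  have b: "0 < b" "bstar \<le> b" using xi assms b_def by auto
  have Hm: "HH dQ (u-l-dQ) b \<le> HH dQ (u-l-dQ) bstar"
    unfolding HH_def
    apply (rule H_mono)
    using pp_pos[of dQ b] pp_mono[of dQ bstar b] pp_bounds[of "u-l-dQ" b] pp_mono[of "u-l-dQ" bstar b]
      assms b by auto
  have h1: "HH dQ (u-l-dQ) bstar < 1" using den_formula(2)[of dQ u l bstar delta] assms by auto
  have "ln (1 - HH dQ (u-l-dQ) bstar) \<le> ln (1 - HH dQ (u-l-dQ) b)"
    using Hm h1 by simp
  hence dle: "f_den l u dQ eps delta bstar \<le> f_den l u dQ eps delta b"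
    using den_formula(1)[of dQ u l bstar delta eps] den_formula(1)[of dQ u l b delta eps] assms b
    by simp
  have d0: "f_den l u dQ eps delta bstar \<noteq> 0" using assms(8) unfolding f_defined_def by auto
  have "dQ = bstar * f_den l u dQ eps delta bstar"
    using assms(9) d0 unfolding f_def by (simp add: divide_simps split: if_splits)
  hence dpos: "f_den l u dQ eps delta bstar = dQ / bstar" using assms(7) by (metis less_irrefl nonzero_mult_div_cancel_left)
  hence dpos': "0 < f_den l u dQ eps delta bstar" using assms by simp
  have "f l u dQ eps delta b \<le> dQ / f_den l u dQ eps delta bstar"
    unfolding f_def using dle dpos' assms(2) by (simp add: frac_le)
  also have "\<dots> = bstar" using dpos assms by simp
  finally have "f l u dQ eps delta b < b" using xi b_def by simp
  moreover have "f_defined l u dQ eps delta b" unfolding f_defined_def using b dle dpos' by simp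
  ultimately show "f_defined l u dQ eps delta (bstar + xi) \<and> bstar + xi > f l u dQ eps delta (bstar + xi)"
    using b_def by simp
qed

end
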